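(* Let $n,q\in\mathbb{N}$ with $2\le q<n$ and let $0<\varepsilon<1$. Put $t_1=\lfloor\frac{n-q}{2}\rfloor-\lceil\log_2\frac1\varepsilon\rceil-2$ and $t_2=\lceil\frac{n-q}{2}\rceil+\lceil\log_2\frac1\varepsilon\rceil+2$. Then $$\sum_{c=\max\{0,t_1\}}^{\min\{t_2,n-q\}}\binom{n-q}{c}\big(2^{\,n-c-q}-1\big)^{c}\;\ge\;(1-\varepsilon)\sum_{c=0}^{n-q}\binom{n-q}{c}\big(2^{\,n-c-q}-1\big)^{c}.$$
   Context: Standard notation; $\log_2$ is the base-2 logarithm and $0^0=1$. *)

theory Defs
  imports "HOL-Analysis.Analysis"
begin

end

theory Submission
  imports Defs
begin

lemma two_s_le: "1 \<le> s \<Longrightarrow> 2 * s \<le> (2::nat) ^ s"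
proof (induction s)
  case 0 then show ?case by simp
next
  case (Suc s)
  show ?case
  proof (cases "s = 0")
    case True then show ?thesis by simp
  next
    case False
    then have "2 * s \<le> 2 ^ s" using Suc by simp
    moreover have "1 \<le> (2::nat) ^ s" by simp
    moreover have "(2::nat) ^ Suc s = 2 * 2 ^ s" by simp
    ultimately have "2 * s + 2 \<le> 2 * 2 ^ s" by arith
    then show ?thesis by simp
  qed
qed

lemma lowerc0:
  assumes "1 \<le> s" "k \<le> s"
  shows "(2::real) ^ (s * k) / 2 \<le> (2 ^ s - 1) ^ k"
proof -
  define x :: real where "x = - 1 / 2 ^ s"
  have x1: "-1 \<le> x" unfolding x_def by (simp add: field_simps)
  have "1 + real k * x \<le> (1 + x) ^ k" using Bernoulli_inequality[OF x1] .
  moreover have "real (2 * k) \<le> real (2 ^ s)" using two_s_le[OF assms(1)] assms(2)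
    by (metis le_trans mult_le_mono2 of_nat_le_iff)
  hence "2 * real k \<le> 2 ^ s" by simp
  hence "1/2 \<le> 1 + real k * x" unfolding x_def by (simp add: field_simps)
  ultimately have h: "1/2 \<le> (1 + x) ^ k" by linarith
  have "(2::real) ^ (s * k) / 2 = (2 ^ s) ^ k * (1/2)" by (simp add: power_mult)
  also have "\<dots> \<le> (2 ^ s) ^ k * (1 + x) ^ k" using h by (intro mult_left_mono) auto
  also have "\<dots> = (2 ^ s * (1 + x)) ^ k" by (simp add: power_mult_distrib)
  also have "2 ^ s * (1 + x) = (2::real) ^ s - 1" unfolding x_def by (simp add: field_simps)
  finally show ?thesis .
qed

lemma upperc:
  assumes "c \<le> m"
  shows "real (m choose c) * ((2::real) ^ (m - c) - 1) ^ c \<le> real (m choose (m div 2)) * 2 ^ (c * (m - c))"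
proof -
  have "real (m choose c) \<le> real (m choose (m div 2))" using binomial_maximum by simp
  moreover have "((2::real) ^ (m - c) - 1) ^ c \<le> (2 ^ (m-c)) ^ c"
    by (intro power_mono) auto
  moreover have "((2::real) ^ (m-c)) ^ c = 2 ^ (c * (m - c))" by (simp add: power_mult[symmetric] mult.commute)
  ultimately show ?thesis
    by (metis (no_types, lifting) mult_mono of_nat_0_le_iff one_le_power order.trans diff_ge_0_iff_ge one_le_numeral zero_le_power)
qed

lemma geo1: "(\<Sum>c<N. (1/2::real) ^ (N - c)) \<le> 1"
proof (induction N)
  case 0 then show ?case by simp
next
  case (Suc N)
  have "(\<Sum>c<Suc N. (1/2::real) ^ (Suc N - c)) = (\<Sum>c<N. (1/2) * (1/2::real) ^ (N - c)) + 1/2"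
    by (simp add: Suc_diff_le)
  also have "\<dots> = (1/2) * (\<Sum>c<N. (1/2::real) ^ (N - c)) + 1/2" by (simp add: sum_distrib_left)
  finally show ?case using Suc by linarith
qed

lemma geo0: "(\<Sum>i<k. (1/2::real) ^ i) = 2 - 2 * (1/2) ^ k"
  by (induction k) simp_all

lemma geo2: "(\<Sum>c\<in>{a..b}. (1/2::real) ^ (c - a)) \<le> 2"
proof (cases "a \<le> b")
  case True
  have "(\<Sum>c\<in>{a..b}. (1/2::real) ^ (c - a)) = (\<Sum>c\<in>{0+a..(b-a)+a}. (1/2::real) ^ (c - a))"
    using True by simp
  also have "\<dots> = (\<Sum>i\<in>{0..b-a}. (1/2::real) ^ (i + a - a))"
    by (rule sum.shift_bounds_cl_nat_ivl)
  also have "\<dots> = (\<Sum>i<Suc (b-a). (1/2::real) ^ i)"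
    by (simp add: atLeast0AtMost lessThan_Suc_atMost)
  also have "\<dots> \<le> 2" unfolding geo0 by simp
  finally show ?thesis .
next
  case False then show ?thesis by simp
qed

lemma aux1: "(K::nat) + 3 \<le> e \<Longrightarrow> K + 3 + e \<le> (K+3) * e"
proof -
  assume h: "K + 3 \<le> e"
  have "K \<le> K * e" using h by simp
  moreover have "3 + e \<le> 3 * e" using h by simp
  moreover have "(K+3)*e = K*e + 3*e" by (simp add: algebra_simps)
  ultimately show ?thesis by linarith
qed

lemma explow:
  fixes c c0 m r K :: nat
  assumes "m = 2*c0 + r" "c + K + 3 \<le> c0"
  shows "c*(m-c) + (K+2+(c0-c)) + 1 \<le> c0*(m-c0)"
proof -
  obtain e where e: "c0 = c + e" using assms(2) le_add1 le_Suc_ex le_trans by (metis add.assoc)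
  have eK: "K + 3 \<le> e" using assms(2) e by simp
  have m1: "m - c = c + 2*e + r" and m2: "m - c0 = c + e + r" using assms(1) e by simp_all
  have "K + 3 + e \<le> (K+3)*e" using aux1[OF eK] .
  also have "\<dots> \<le> e*e" using eK by simp
  finally have *: "K + 3 + e \<le> e * e" .
  show ?thesis unfolding m1 m2 using * e by (simp add: algebra_simps)
qed

lemma exphigh_core:
  fixes w d r K :: nat
  assumes "K + 3 \<le> d"
  shows "(w+2*d+r)*w + (K+2+(d+r)) + 1 \<le> (w+d)*(w+d+r)"
proof -
  have "K + 3 + d \<le> (K+3)*d" using aux1[OF assms] .
  also have "\<dots> \<le> d*d" using assms by simp
  finally have *: "K + 3 + d \<le> d * d" .
  have **: "r \<le> d * r" using assms by simp
  have e1: "(w+2*d+r)*w + (K+2+(d+r)) + 1 = (w*w + 2*d*w + r*w) + (K+3+d) + r" by (simp add: algebra_simps)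
  have e2: "(w+d)*(w+d+r) = (w*w+2*d*w+r*w) + d*d + d*r" by (simp add: algebra_simps)
  show ?thesis unfolding e1 e2 using * ** by linarith
qed

lemma exphigh:
  fixes c c0 m r K :: nat
  assumes "m = 2*c0 + r" "c0 + r + K + 3 \<le> c" "c \<le> m"
  shows "c*(m-c) + (K+2+(c-c0)) + 1 \<le> c0*(m-c0)"
proof -
  obtain w where w: "m = c + w" using assms(3) le_Suc_ex by blast
  obtain d where d: "c = c0 + r + d" using assms(2) le_Suc_ex by (metis le_add1 le_trans add.assoc)
  have dK: "K + 3 \<le> d" using assms(2) d by simp
  have h5: "c0 = w + d" using assms(1) w d by simp
  have h4: "c = w + 2*d + r" using d h5 by simp
  have h1: "m - c = w" and h2: "c - c0 = d + r" and h3: "m - c0 = w + d + r"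
    using w d h5 by simp_all
  show ?thesis unfolding h1 h2 h3 using exphigh_core[OF dK, of w r] by (simp add: h4 h5)
qed

lemma comb:
  fixes x y M :: real
  assumes "x \<le> M*2^a" "M*2^b/2 \<le> y" "a+e+1 \<le> b" "0 \<le> M" "0 \<le> x"
  shows "x*2^e \<le> y"
proof -
  have "x*2^e \<le> M*2^a*2^e" using assms by (intro mult_right_mono) auto
  also have "\<dots> = M*2^(a+e+1)/2" by (simp add: power_add)
  also have "\<dots> \<le> M*2^b/2" using assms by (intro divide_right_mono mult_left_mono power_increasing) auto
  finally show ?thesis using assms(2) by linarith
qed

theorem lemma8p12:
  fixes n q :: nat and \<epsilon> :: real and t1 t2 :: int
  assumes "2 \<le> q" "q < n" "0 < \<epsilon>" "\<epsilon> < 1"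
    and "t1 = \<lfloor>real (n - q) / 2\<rfloor> - \<lceil>log 2 (1 / \<epsilon>)\<rceil> - 2"
    and "t2 = \<lceil>real (n - q) / 2\<rceil> + \<lceil>log 2 (1 / \<epsilon>)\<rceil> + 2"
  shows "(\<Sum>c\<in>{max 0 t1..min t2 (int (n - q))}.
            real ((n - q) choose nat c) * (2 ^ (n - nat c - q) - 1) ^ nat c)
         \<ge> (1 - \<epsilon>) * (\<Sum>c=0..n - q. real ((n - q) choose c) * (2 ^ (n - c - q) - 1) ^ c)"
proof -
  define m where "m = n - q"
  have m1: "1 \<le> m" using assms(2) m_def by simp
  define c0 where "c0 = m div 2"
  define r where "r = m mod 2"
  have mdec: "m = 2*c0 + r" unfolding c0_def r_def by simp
  have r1: "r \<le> 1" unfolding r_def by simp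
  have c0m: "c0 < m" using m1 unfolding c0_def by simp
  have lpos: "0 < log 2 (1/\<epsilon>)" using assms(3,4) by simp
  define K where "K = nat \<lceil>log 2 (1/\<epsilon>)\<rceil>"
  have Kint: "\<lceil>log 2 (1/\<epsilon>)\<rceil> = int K" unfolding K_def using lpos by simp
  have epsK: "1/2^K \<le> \<epsilon>"
  proof -
    have "log 2 (1/\<epsilon>) \<le> real K" using Kint le_of_int_ceiling by (metis of_int_of_nat_eq)
    hence "2 powr log 2 (1/\<epsilon>) \<le> 2 powr real K" by (intro powr_mono) auto
    hence "1/\<epsilon> \<le> 2^K" using assms(3) by (simp add: powr_realpow)
    thus ?thesis using assms(3) by (simp add: field_simps)
  qed
  have half: "real m / 2 = real c0 + real r / 2" using mdec by simp
  have fl: "\<lfloor>real m / 2\<rfloor> = int c0"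
    unfolding half using r1 by (subst floor_eq_iff) auto
  have ce: "\<lceil>real m / 2\<rceil> = int (c0 + r)"
    unfolding half using r1 by (cases "r = 0") (auto simp: ceiling_eq_iff)
  have t1: "t1 = int c0 - int K - 2" using assms(5) fl Kint m_def by simp
  have t2: "t2 = int c0 + int r + int K + 2" using assms(6) ce Kint m_def by simp
  define f where "f c = real (m choose c) * ((2::real)^(m-c) - 1)^c" for c
  define B where "B = {c\<in>{0..m}. t1 \<le> int c \<and> int c \<le> t2}"
  define L where "L = {c\<in>{0..m}. int c < t1}"
  define H where "H = {c\<in>{0..m}. t2 < int c}"
  have rhs: "(\<Sum>c=0..n - q. real ((n - q) choose c) * (2 ^ (n - c - q) - 1) ^ c) = sum f {0..m}"
    unfolding f_def m_def by (intro sum.cong) (simp_all add: add.commute)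
  have iset: "{max 0 t1..min t2 (int m)} = int ` B"
  proof
    show "{max 0 t1..min t2 (int m)} \<subseteq> int ` B"
    proof
      fix x assume x: "x \<in> {max 0 t1..min t2 (int m)}"
      hence x4: "0 \<le> x" "t1 \<le> x" "x \<le> t2" "x \<le> int m" by simp_all
      hence xB: "nat x \<in> B" unfolding B_def by simp
      have xe: "x = int (nat x)" using x4 by simp
      show "x \<in> int ` B" by (rule image_eqI[where f=int, OF xe xB])
    qed
    show "int ` B \<subseteq> {max 0 t1..min t2 (int m)}" unfolding B_def by auto
  qed
  have lhs: "(\<Sum>c\<in>{max 0 t1..min t2 (int (n - q))}.
            real ((n - q) choose nat c) * (2 ^ (n - nat c - q) - 1) ^ nat c) = sum f B"
  proof -
    have "(\<Sum>c\<in>{max 0 t1..min t2 (int (n - q))}.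
            real ((n - q) choose nat c) * (2 ^ (n - nat c - q) - 1) ^ nat c)
        = (\<Sum>c\<in>int ` B. real (m choose nat c) * (2 ^ (m - nat c) - 1) ^ nat c)"
      unfolding iset[symmetric] m_def by (intro sum.cong) (simp_all add: add.commute)
    also have "\<dots> = sum f B" by (subst sum.reindex) (auto simp: f_def)
    finally show ?thesis .
  qed
  have fin: "finite B" "finite L" "finite H" unfolding B_def L_def H_def by auto
  have part: "{0..m} = B \<union> (L \<union> H)" unfolding B_def L_def H_def by auto
  have tle: "t1 \<le> t2" using t1 t2 by simp
  have disj: "B \<inter> (L \<union> H) = {}" "L \<inter> H = {}" unfolding B_def L_def H_def using tle by auto
  have split: "sum f {0..m} = sum f B + sum f L + sum f H"
    unfolding part using fin disj by (simp add: sum.union_disjoint)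
  have fnn: "0 \<le> f c" if "c \<le> m" for c
    unfolding f_def using that by (intro mult_nonneg_nonneg zero_le_power) auto
  define M where "M = real (m choose c0)"
  have M0: "0 \<le> M" unfolding M_def by simp
  have fc0: "M * 2^(c0*(m-c0)) / 2 \<le> f c0"
  proof -
    have "(2::real) ^ ((m-c0) * c0) / 2 \<le> (2 ^ (m-c0) - 1) ^ c0"
      using c0m mdec by (intro lowerc0) auto
    hence "M * ((2::real) ^ ((m-c0) * c0) / 2) \<le> M * (2 ^ (m-c0) - 1) ^ c0"
      using M0 by (intro mult_left_mono)
    thus ?thesis unfolding f_def M_def by (simp add: mult.commute)
  qed
  have fupper: "f c \<le> M * 2^(c*(m-c))" if "c \<le> m" for c
    unfolding f_def M_def c0_def using upperc[OF that] .
  define A where "A = f c0 / 2^(K+2)"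
  have low: "f c \<le> A * (1/2)^(c0 - c)" if "c \<in> L" for c
  proof -
    have c: "c \<le> m" "c + K + 3 \<le> c0" using that t1 unfolding L_def by auto
    have "f c * 2^(K+2+(c0-c)) \<le> f c0"
      using comb[OF fupper[OF c(1)] fc0 explow[OF mdec c(2)] M0 fnn[OF c(1)]] .
    hence h: "f c * (2^(K+2) * 2^(c0 - c)) \<le> f c0" by (simp add: power_add)
    have P: "(0::real) < 2^(K+2) * 2^(c0 - c)" by simp
    have "A * (1/2)^(c0 - c) = f c0 / (2^(K+2) * 2^(c0 - c))" unfolding A_def by (simp add: power_one_over)
    thus ?thesis using pos_le_divide_eq[OF P] h by simp
  qed
  have high: "f c \<le> A * (1/2)^(c - c0)" if "c \<in> H" for c
  proof -
    have c: "c \<le> m" "c0 + r + K + 3 \<le> c" using that t2 unfolding H_def by auto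
    have "f c * 2^(K+2+(c-c0)) \<le> f c0"
      using comb[OF fupper[OF c(1)] fc0 exphigh[OF mdec c(2) c(1)] M0 fnn[OF c(1)]] .
    hence h: "f c * (2^(K+2) * 2^(c - c0)) \<le> f c0" by (simp add: power_add)
    have P: "(0::real) < 2^(K+2) * 2^(c - c0)" by simp
    have "A * (1/2)^(c - c0) = f c0 / (2^(K+2) * 2^(c - c0))" unfolding A_def by (simp add: power_one_over)
    thus ?thesis using pos_le_divide_eq[OF P] h by simp
  qed
  have A0: "0 \<le> A" unfolding A_def using fnn c0m by simp
  have sL: "sum f L \<le> A"
  proof -
    have "sum f L \<le> (\<Sum>c\<in>L. A * (1/2)^(c0 - c))" using low by (intro sum_mono) auto
    also have "\<dots> \<le> (\<Sum>c<c0. A * (1/2)^(c0 - c))"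
      using A0 t1 by (intro sum_mono2) (auto simp: L_def)
    also have "\<dots> = A * (\<Sum>c<c0. (1/2::real)^(c0 - c))" by (simp add: sum_distrib_left)
    also have "\<dots> \<le> A * 1" using A0 geo1 by (intro mult_left_mono) auto
    finally show ?thesis by simp
  qed
  have sH: "sum f H \<le> 2 * A"
  proof -
    have "sum f H \<le> (\<Sum>c\<in>H. A * (1/2)^(c - c0))" using high by (intro sum_mono) auto
    also have "\<dots> \<le> (\<Sum>c\<in>{c0..m}. A * (1/2)^(c - c0))"
      using A0 t2 by (intro sum_mono2) (auto simp: H_def)
    also have "\<dots> = A * (\<Sum>c\<in>{c0..m}. (1/2::real)^(c - c0))" by (simp add: sum_distrib_left)
    also have "\<dots> \<le> A * 2" using A0 geo2 by (intro mult_left_mono) auto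
    finally show ?thesis by simp
  qed
  have fc0S: "f c0 \<le> sum f {0..m}"
    using c0m fnn by (intro member_le_sum) auto
  have fc0n: "0 \<le> f c0" using fnn c0m by simp
  have "A = (f c0 / 2^K) / 4" by (simp add: A_def power_add)
  moreover have "0 \<le> f c0 / 2^K" using fc0n by simp
  moreover have "\<And>X::real. 0 \<le> X \<Longrightarrow> 3 * (X / 4) \<le> X" by linarith
  ultimately have "3 * A \<le> f c0 / 2^K" by metis
  also have "\<dots> = (1/2^K) * f c0" by simp
  also have "\<dots> \<le> \<epsilon> * f c0" using epsK fc0n by (rule mult_right_mono)
  also have "\<dots> \<le> \<epsilon> * sum f {0..m}" using fc0S assms(3) by simp
  finally have "sum f L + sum f H \<le> \<epsilon> * sum f {0..m}" using sL sH by linarith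
  hence "(1 - \<epsilon>) * sum f {0..m} \<le> sum f B" using split by (simp add: algebra_simps)
  thus ?thesis unfolding lhs rhs by simp
qed

end
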